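(* Fix $(z_1,z_2)$ ranging over $0<|z_1|,|z_2|<1$. The linear maps $$\int_{C_{1\otimes2}}:S^0(A^{(1)}_{1\otimes2})\otimes S^0(A^{(2)}_{1\otimes2})\to\mathcal F,\qquad \int_{C_{2\otimes1}}:S^0(A^{(2)}_{2\otimes1})\otimes S^0(A^{(1)}_{2\otimes1})\to\mathcal F$$ are injective.
   Context: Forms: $\zeta_i=dz_i/z_i$, $\zeta_{ii}=dz_i/(1-z_i)$ ($i=1,2$), $\zeta_{12}=d(z_1z_2)/(1-z_1z_2)$, $\zeta^{(1)}_{12}=z_2dz_1/(1-z_1z_2)$, $\zeta^{(2)}_{12}=z_1dz_2/(1-z_1z_2)$. $A^{(1)}_{1\otimes2}=\{\zeta_1,\zeta_{11},\zeta^{(1)}_{12}\}$, $A^{(2)}_{1\otimes2}=\{\zeta_2,\zeta_{22}\}$, $A^{(2)}_{2\otimes1}=\{\zeta_2,\zeta_{22},\zeta^{(2)}_{12}\}$, $A^{(1)}_{2\otimes1}=\{\zeta_1,\zeta_{11}\}$; for an alphabet $B$, $S^0(B)$ is the vector space with basis the words in $B$ not ending with $\zeta_1$ or $\zeta_2$ (including the empty word $\mathbf 1$). For words $\psi$ of 1-forms in one variable, $\int_0^z\omega_1\circ\cdots\circ\omega_r=\int_0^z\omega_1(t)\int_0^t\omega_2\circ\cdots\circ\omega_r$, $\int\mathbf 1=1$ (the other variable being a parameter). Define $\int_{C_{1\otimes2}}\psi_1\otimes\psi_2=\int_{0}^{z_1}\psi_1\cdot\int_0^{z_2}\psi_2$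 for $\psi_1\otimes\psi_2\in S^0(A^{(1)}_{1\otimes2})\otimes S^0(A^{(2)}_{1\otimes2})$ (integration in $z_1$ with $z_2$ fixed, resp. in $z_2$), and $\int_{C_{2\otimes1}}\psi_1\otimes\psi_2=\int_0^{z_2}\psi_1\cdot\int_0^{z_1}\psi_2$ for $\psi_1\otimes\psi_2\in S^0(A^{(2)}_{2\otimes1})\otimes S^0(A^{(1)}_{2\otimes1})$, extended linearly; these are the iterated integrals along the paths $(0,0)\to(0,z_2)\to(z_1,z_2)$ and $(0,0)\to(z_1,0)\to(z_1,z_2)$. $\mathcal F$ denotes the algebra of many-valued analytic functions of $(z_1,z_2)$ on $(\mathbf P^1\times\mathbf P^1)-D$, $D=\{z_1=0,1,\infty\}\cup\{z_2=0,1,\infty\}\cup\{z_1z_2=1\}$, obtained as iterated integrals from $(0,0)$ of elements of the reduced bar algebra (so both maps take values in $\mathcal F$). *)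

theory Defs
  imports "HOL-Complex_Analysis.Complex_Analysis"
begin

text \<open>Z1 = zeta_1 = dz1/z1, Z11 = zeta_11 = dz1/(1-z1),
  Z12a = zeta^(1)_12 = z2 dz1/(1-z1 z2), Z2 = zeta_2 = dz2/z2, Z22 = zeta_22 = dz2/(1-z2),
  Z12b = zeta^(2)_12 = z1 dz2/(1-z1 z2).\<close>
datatype form = Z1 | Z11 | Z12a | Z2 | Z22 | Z12b

definition A1_12 :: "form set" where "A1_12 = {Z1, Z11, Z12a}"
definition A2_12 :: "form set" where "A2_12 = {Z2, Z22}"
definition A2_21 :: "form set" where "A2_21 = {Z2, Z22, Z12b}"
definition A1_21 :: "form set" where "A1_21 = {Z1, Z11}"

text \<open>Basis words of S^0(B): words in B not ending with zeta_1 or zeta_2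
  (the first list element is the outermost form omega_1).\<close>
definition S0 :: "form set \<Rightarrow> form list set" where
  "S0 B = {w. set w \<subseteq> B \<and> (w \<noteq> [] \<longrightarrow> last w \<notin> {Z1, Z2})}"

text \<open>Coefficient of a letter as a 1-form f(t) dt in the integration variable t,
  with y the other variable as parameter.\<close>
fun form_coef :: "form \<Rightarrow> complex \<Rightarrow> complex \<Rightarrow> complex" where
  "form_coef Z1 y t = 1 / t"
| "form_coef Z11 y t = 1 / (1 - t)"
| "form_coef Z12a y t = y / (1 - t * y)"
| "form_coef Z2 y t = 1 / t"
| "form_coef Z22 y t = 1 / (1 - t)"
| "form_coef Z12b y t = y / (1 - y * t)"

fun iter_int :: "complex \<Rightarrow> form list \<Rightarrow> complex \<Rightarrow> complex" where
  "iter_int y [] z = 1"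
| "iter_int y (\<omega> # ws) z =
     contour_integral (linepath 0 z) (\<lambda>t. form_coef \<omega> y t * iter_int y ws t)"

definition int_C12 :: "form list \<times> form list \<Rightarrow> complex \<times> complex \<Rightarrow> complex" where
  "int_C12 p z = iter_int (snd z) (fst p) (fst z) * iter_int (fst z) (snd p) (snd z)"

definition int_C21 :: "form list \<times> form list \<Rightarrow> complex \<times> complex \<Rightarrow> complex" where
  "int_C21 p z = iter_int (fst z) (fst p) (snd z) * iter_int (snd z) (snd p) (fst z)"

text \<open>Tensor product S^0(A) \<otimes> S^0(B) over \<complex>: finitely supported coefficient
  functions on pairs of basis words.\<close>
definition tensor_S0 :: "form set \<Rightarrow> form set \<Rightarrow> (form list \<times> form list \<Rightarrow> complex) set" where
  "tensor_S0 A B = {c. finite {p. c p \<noteq> 0} \<and>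
      (\<forall>p. c p \<noteq> 0 \<longrightarrow> fst p \<in> S0 A \<and> snd p \<in> S0 B)}"

definition lin_ext :: "(form list \<times> form list \<Rightarrow> complex \<times> complex \<Rightarrow> complex)
    \<Rightarrow> (form list \<times> form list \<Rightarrow> complex) \<Rightarrow> complex \<times> complex \<Rightarrow> complex" where
  "lin_ext I c z = (\<Sum>p\<in>{p. c p \<noteq> 0}. c p * I p z)"

definition bidisc :: "(complex \<times> complex) set" where
  "bidisc = {z. 0 < norm (fst z) \<and> norm (fst z) < 1 \<and> 0 < norm (snd z) \<and> norm (snd z) < 1}"

end

theory Submission imports Defs "HOL-Computational_Algebra.Polynomial" begin


definition good :: "form list \<Rightarrow> bool" where
  "good w \<longleftrightarrow> (w = [] \<or> last w \<notin> {Z1, Z2})"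

lemma good_tl: "good (a # w) \<Longrightarrow> good w"
  by (cases w) (auto simp: good_def)

lemma coef_hol: "norm y < 1 \<Longrightarrow> a \<notin> {Z1,Z2} \<Longrightarrow> form_coef a y holomorphic_on ball 0 1"
proof -
  assume y: "norm y < 1" and a: "a \<notin> {Z1,Z2}"
  have n1: "1 - t \<noteq> 0" if "t \<in> ball 0 1" for t :: complex
    using that by (auto simp: dist_norm)
  have n2: "1 - t * y \<noteq> 0" "1 - y * t \<noteq> 0" if "t \<in> ball 0 1" for t :: complex
  proof -
    have "norm t < 1" using that by (simp add: dist_norm)
    then have "norm t * norm y < 1 * 1" using y by (intro mult_strict_mono') auto
    then have "norm (t*y) < 1" by (simp add: norm_mult)
    then show "1 - t * y \<noteq> 0" "1 - y * t \<noteq> 0" by (auto simp: mult.commute)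
  qed
  have "(\<lambda>t. form_coef a y t) holomorphic_on ball 0 1" using a n1 n2
    by (cases a) (auto intro!: holomorphic_intros)
  then show ?thesis by simp
qed

lemma step:
  assumes y: "norm y < 1" and g: "good (a # w)" and hw: "iter_int y w holomorphic_on ball 0 1"
  shows "iter_int y (a # w) holomorphic_on ball 0 1"
    "\<And>z. z \<in> ball 0 1 \<Longrightarrow> z \<noteq> 0 \<Longrightarrow>
       (iter_int y (a # w) has_field_derivative form_coef a y z * iter_int y w z) (at z)"
proof -
  define g where "g = (\<lambda>t. form_coef a y t * iter_int y w t)"
  obtain h where hh: "h holomorphic_on ball 0 1" and hg: "\<And>t. t \<in> ball 0 1 \<Longrightarrow> t \<noteq> 0 \<Longrightarrow> h t = g t"
  proof (cases "a \<in> {Z1, Z2}")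
    case True
    then have "w \<noteq> []" using g by (auto simp: good_def)
    then obtain b ws where "w = b # ws" by (cases w) auto
    then have w0: "iter_int y w 0 = 0" by simp
    show ?thesis
      apply (rule that[of "\<lambda>z. if z = 0 then deriv (iter_int y w) 0 else (iter_int y w z - iter_int y w 0) / (z - 0)"])
      using pole_lemma[OF hw, of 0] True w0 unfolding g_def by (auto simp: interior_open)
  next
    case False
    show ?thesis
      apply (rule that[of g])
      unfolding g_def using coef_hol[OF y False] hw by (auto intro!: holomorphic_intros)
  qed
  obtain G where G: "\<And>x. x \<in> ball 0 1 \<Longrightarrow> (G has_field_derivative h x) (at x within ball 0 1)"
    using holomorphic_convex_primitive'[OF convex_ball open_ball hh] by blast
  have eq: "iter_int y (a # w) z = G z - G 0" if z: "z \<in> ball 0 1" for z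
  proof -
    have ps: "path_image (linepath 0 z) \<subseteq> ball 0 1"
      using z by (simp add: closed_segment_subset convex_ball)
    have "(h has_contour_integral (G z - G 0)) (linepath 0 z)"
      using contour_integral_primitive[OF G _ ps] by simp
    then have hi: "contour_integral (linepath 0 z) h = G z - G 0"
      by (rule contour_integral_unique)
    show ?thesis
    proof (cases "z = 0")
      case True then show ?thesis by simp
    next
      case False
      have "contour_integral (linepath 0 z) g = contour_integral (linepath 0 z) h"
        by (rule contour_integral_spike_finite_simple_path[of "{0}"])
           (use False ps hg in auto)
      then show ?thesis using hi by (simp add: g_def)
    qed
  qed
  have D: "(iter_int y (a # w) has_field_derivative h z) (at z)" if z: "z \<in> ball 0 1" for z
  proof -
    have "((\<lambda>x. G x - G 0) has_field_derivative h z) (at z)"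
      using G[OF z] at_within_open[OF z open_ball] by (auto intro!: derivative_eq_intros)
    then show ?thesis
      by (rule has_field_derivative_transform_within_open[OF _ open_ball z]) (use eq in auto)
  qed
  show "iter_int y (a # w) holomorphic_on ball 0 1"
    using D by (meson field_differentiable_at_within field_differentiable_def holomorphic_on_def)
  show "(iter_int y (a # w) has_field_derivative form_coef a y z * iter_int y w z) (at z)"
    if "z \<in> ball 0 1" "z \<noteq> 0" for z
    using D[OF that(1)] hg[OF that] by (simp add: g_def)
qed

lemma hol: "norm y < 1 \<Longrightarrow> good w \<Longrightarrow> iter_int y w holomorphic_on ball 0 1"
proof (induction w)
  case Nil then show ?case by simp
next
  case (Cons a w)
  then show ?case using step(1)[of y a w] good_tl by blast
qed

lemma deriv_step: "norm y < 1 \<Longrightarrow> good (a # w) \<Longrightarrow> z \<in> ball 0 1 \<Longrightarrow> z \<noteq> 0 \<Longrightarrow>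
   (iter_int y (a # w) has_field_derivative form_coef a y z * iter_int y w z) (at z)"
  using step(2) hol good_tl by blast



fun alpha :: "form \<Rightarrow> complex \<Rightarrow> complex" where
  "alpha Z1 y = 0" | "alpha Z2 y = 0" | "alpha Z11 y = 1" | "alpha Z22 y = 1"
| "alpha Z12a y = 1/y" | "alpha Z12b y = 1/y"

fun kappa :: "form \<Rightarrow> complex" where
  "kappa Z1 = 1" | "kappa Z2 = 1" | "kappa Z11 = -1" | "kappa Z22 = -1"
| "kappa Z12a = -1" | "kappa Z12b = -1"

definition Qp :: "complex \<Rightarrow> complex poly" where
  "Qp y = [:0,1:] * [:-1,1:] * [:-(1/y),1:]"

fun qf :: "form \<Rightarrow> complex \<Rightarrow> complex poly" where
  "qf Z1 y = [:-1,1:] * [:-(1/y),1:]"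
| "qf Z2 y = [:-1,1:] * [:-(1/y),1:]"
| "qf Z11 y = smult (-1) ([:0,1:] * [:-(1/y),1:])"
| "qf Z22 y = smult (-1) ([:0,1:] * [:-(1/y),1:])"
| "qf Z12a y = smult (-1) ([:0,1:] * [:-1,1:])"
| "qf Z12b y = smult (-1) ([:0,1:] * [:-1,1:])"

lemma kappa_nz: "kappa a \<noteq> 0" by (cases a) auto

lemma coef_eq: "y \<noteq> 0 \<Longrightarrow> form_coef a y t = kappa a / (t - alpha a y)"
proof (cases a)
  case Z12a
  assume y: "y \<noteq> 0"
  show ?thesis
  proof (cases "t * y = 1")
    case True
    then have "t = 1/y" using y by (simp add: field_simps)
    then show ?thesis using Z12a True by simp
  next
    case False
    then have "t - 1/y \<noteq> 0" using y by (auto simp: field_simps)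
    then show ?thesis using Z12a False y by (simp add: field_simps)
  qed
next
  case Z12b
  assume y: "y \<noteq> 0"
  show ?thesis
  proof (cases "y * t = 1")
    case True
    then have "t = 1/y" using y by (simp add: field_simps)
    then show ?thesis using Z12b True by simp
  next
    case False
    then have "t - 1/y \<noteq> 0" using y by (auto simp: field_simps)
    then show ?thesis using Z12b False y by (simp add: field_simps)
  qed
next
  case Z11 then show ?thesis by (cases "t = 1") (auto simp: field_simps)
next
  case Z22 then show ?thesis by (cases "t = 1") (auto simp: field_simps)
qed auto

lemma poly_Qp: "poly (Qp y) t = t * (t - 1) * (t - 1/y)"
  by (simp add: Qp_def algebra_simps)

lemma Qp_nz: "Qp y \<noteq> 0"
  by (simp add: Qp_def)

lemma Q_root: "poly (Qp y) (alpha a y) = 0"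
  by (cases a) (auto simp: poly_Qp)

lemma qf_eq: assumes "y \<noteq> 0" "poly (Qp y) t \<noteq> 0"
  shows "poly (qf a y) t = poly (Qp y) t * form_coef a y t"
proof -
  have "t \<noteq> 0" "t \<noteq> 1" "t \<noteq> 1/y" using assms(2) by (auto simp: poly_Qp)
  then have "t - 1 \<noteq> 0" "t - 1/y \<noteq> 0" by auto
  then show ?thesis using \<open>t \<noteq> 0\<close> assms(1)
    by (cases a) (auto simp: coef_eq poly_Qp field_simps)
qed

lemma Q_nz_D: assumes "y \<noteq> 0" "norm y < 1" "0 < norm t" "norm t < 1"
  shows "poly (Qp y) t \<noteq> 0"
proof -
  have "norm (1/y) > 1" using assms(1,2) by (simp add: norm_divide field_simps)
  then have "t \<noteq> 1/y" using assms(4) by auto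
  moreover have "t \<noteq> 1" "t \<noteq> 0" using assms(3,4) by auto
  ultimately show ?thesis by (simp add: poly_Qp)
qed



lemma residue_lemma:
  fixes P0 R :: "complex poly" and c :: "form \<Rightarrow> complex"
  assumes y: "y \<noteq> 0" and fin: "finite B" and inj: "inj_on (\<lambda>a. alpha a y) B"
    and P0: "P0 \<noteq> 0"
    and idp: "P0 * Qp y * pderiv R - Qp y * pderiv P0 * R + P0 * (\<Sum>b\<in>B. smult (c b) P0 * qf b y) = 0"
    and a: "a \<in> B"
  shows "c a = 0"
proof -
  define Q where "Q = Qp y"
  define Z where "Z = {t. poly (P0 * Q) t = 0}"
  have "P0 * Q \<noteq> 0" using P0 Qp_nz by (simp add: Q_def)
  then have finZ: "finite Z" unfolding Z_def by (rule poly_roots_finite)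
  define \<alpha> where "\<alpha> = alpha a y"
  obtain \<delta> where d0: "\<delta> > 0" and dZ: "\<And>x. x \<in> Z \<Longrightarrow> x \<noteq> \<alpha> \<Longrightarrow> \<delta> \<le> dist \<alpha> x"
    using finite_set_avoid[OF finZ, of \<alpha>] by blast
  define S where "S = - Z"
  have oS: "open S" unfolding S_def using finZ by (simp add: finite_imp_closed open_Compl)
  define F where "F = (\<lambda>t. \<Sum>b\<in>B. c b * form_coef b y t)"
  have der: "((\<lambda>t. poly R t / poly P0 t) has_field_derivative - F t) (at t within S)" if t: "t \<in> S" for t
  proof -
    have nz: "poly P0 t \<noteq> 0" "poly Q t \<noteq> 0" using t by (auto simp: S_def Z_def)
    have D: "((\<lambda>t. poly R t / poly P0 t) has_field_derivative
        (poly (pderiv R) t * poly P0 t - poly R t * poly (pderiv P0) t) / (poly P0 t * poly P0 t)) (at t)"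
      using nz by (auto intro!: derivative_eq_intros poly_DERIV)
    have e: "poly (P0 * Qp y * pderiv R - Qp y * pderiv P0 * R + P0 * (\<Sum>b\<in>B. smult (c b) P0 * qf b y)) t = 0"
      using idp by simp
    have qfe: "poly (qf b y) t = poly Q t * form_coef b y t" for b
      using qf_eq[OF y, of t b] nz by (simp add: Q_def)
    have "(\<Sum>b\<in>B. poly (smult (c b) P0 * qf b y) t) = poly P0 t * poly Q t * F t"
      by (simp add: F_def qfe sum_distrib_left algebra_simps)
    with e have "poly Q t * (poly P0 t * poly (pderiv R) t - poly (pderiv P0) t * poly R t
        + poly P0 t * poly P0 t * F t) = 0"
      by (simp add: poly_sum Q_def algebra_simps)
    then have "poly P0 t * poly (pderiv R) t - poly (pderiv P0) t * poly R t
        + poly P0 t * poly P0 t * F t = 0" using nz by simp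
    then have "(poly (pderiv R) t * poly P0 t - poly R t * poly (pderiv P0) t) / (poly P0 t * poly P0 t) = - F t"
      using nz by (simp add: field_simps)
    with D show ?thesis by (simp add: has_field_derivative_at_within)
  qed
  define \<gamma> where "\<gamma> = circlepath \<alpha> (\<delta>/2)"
  have pim: "path_image \<gamma> = sphere \<alpha> (\<delta>/2)" using d0 by (simp add: \<gamma>_def)
  have pS: "path_image \<gamma> \<subseteq> S"
  proof
    fix x assume "x \<in> path_image \<gamma>"
    then have dx: "dist \<alpha> x = \<delta>/2" by (simp add: pim)
    show "x \<in> S"
    proof (rule ccontr)
      assume "x \<notin> S"
      then have "x \<in> Z" by (simp add: S_def)
      moreover have "x \<noteq> \<alpha>" using dx d0 by auto
      ultimately have "\<delta> \<le> dist \<alpha> x" by (rule dZ)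
      with dx d0 show False by simp
    qed
  qed
  have int0: "((\<lambda>t. - F t) has_contour_integral 0) \<gamma>"
    using Cauchy_theorem_primitive[OF der, of \<gamma>] pS by (simp add: \<gamma>_def)
  have intF: "(F has_contour_integral 0) \<gamma>"
    using has_contour_integral_neg[OF int0] by simp
  have each: "((\<lambda>t. c b * form_coef b y t) has_contour_integral
      (if b = a then c b * (2 * of_real pi * \<i> * kappa b) else 0)) \<gamma>" if b: "b \<in> B" for b
  proof (cases "b = a")
    case True
    have "((\<lambda>u. kappa a / (u - \<alpha>)) has_contour_integral (2 * of_real pi * \<i> * kappa a)) \<gamma>"
      unfolding \<gamma>_def using Cauchy_integral_circlepath_simple[of "\<lambda>_. kappa a" \<alpha> "\<delta>/2" \<alpha>] d0 by simp
    then have "((\<lambda>u. c a * (kappa a / (u - \<alpha>))) has_contour_integral c a * (2 * of_real pi * \<i> * kappa a)) \<gamma>"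
      by (rule has_contour_integral_lmul)
    then show ?thesis using True by (simp add: coef_eq[OF y] \<alpha>_def)
  next
    case False
    define \<beta> where "\<beta> = alpha b y"
    have "\<beta> \<noteq> \<alpha>" using inj False a b unfolding \<alpha>_def \<beta>_def by (auto dest: inj_onD)
    moreover have "\<beta> \<in> Z" by (simp add: Z_def \<beta>_def Q_def Q_root)
    ultimately have db: "\<delta> \<le> dist \<alpha> \<beta>" using dZ by blast
    have hol: "(\<lambda>u. kappa b / (u - \<beta>)) holomorphic_on ball \<alpha> \<delta>"
    proof -
      have "u - \<beta> \<noteq> 0" if "u \<in> ball \<alpha> \<delta>" for u using that db by auto
      then show ?thesis by (auto intro!: holomorphic_intros)
    qed
    have sub: "path_image \<gamma> \<subseteq> ball \<alpha> \<delta>" using d0 by (auto simp: pim)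
    have "((\<lambda>u. kappa b / (u - \<beta>)) has_contour_integral 0) \<gamma>"
      using Cauchy_theorem_disc_simple[OF hol _ sub] by (simp add: \<gamma>_def)
    then have "((\<lambda>u. c b * (kappa b / (u - \<beta>))) has_contour_integral c b * 0) \<gamma>"
      by (rule has_contour_integral_lmul)
    then show ?thesis using False by (simp add: coef_eq[OF y] \<beta>_def)
  qed
  have "(F has_contour_integral (\<Sum>b\<in>B. if b = a then c b * (2 * of_real pi * \<i> * kappa b) else 0)) \<gamma>"
    unfolding F_def by (rule has_contour_integral_sum[OF fin each])
  then have "(F has_contour_integral (c a * (2 * of_real pi * \<i> * kappa a))) \<gamma>"
    using a fin by (simp add: sum.delta')
  note hF = this
  have "c a * (2 * of_real pi * \<i> * kappa a) = 0"
    using has_contour_integral_unique[OF hF intF] by simp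
  then show ?thesis using kappa_nz[of a] by simp
qed

lemma poly_ratio_const:
  fixes P0 R :: "complex poly"
  assumes P0: "P0 \<noteq> 0" and e: "P0 * pderiv R = pderiv P0 * R"
  shows "\<exists>c. R = smult c P0"
proof -
  define Z where "Z = {t. poly P0 t = 0}"
  have finZ: "finite Z" unfolding Z_def using P0 by (rule poly_roots_finite)
  obtain t0 where t0: "t0 \<notin> Z"
  proof -
    have "infinite (UNIV :: complex set)" by (rule infinite_UNIV_char_0)
    have "\<not> UNIV \<subseteq> Z"
    proof
      assume "UNIV \<subseteq> Z"
      then have "finite (UNIV :: complex set)" using finZ by (rule finite_subset)
      with \<open>infinite (UNIV :: complex set)\<close> show False by simp
    qed
    then obtain x where "x \<notin> Z" by auto
    then show ?thesis by (rule that)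
  qed
  obtain \<delta> where d0: "\<delta> > 0" and dZ: "\<And>x. x \<in> Z \<Longrightarrow> x \<noteq> t0 \<Longrightarrow> \<delta> \<le> dist t0 x"
    using finite_set_avoid[OF finZ, of t0] by blast
  have nz: "poly P0 t \<noteq> 0" if "t \<in> ball t0 \<delta>" for t
  proof
    assume "poly P0 t = 0"
    then have "t \<in> Z" by (simp add: Z_def)
    moreover from this t0 have "t \<noteq> t0" by auto
    ultimately have "\<delta> \<le> dist t0 t" by (rule dZ)
    with that show False by simp
  qed
  have dz: "((\<lambda>t. poly R t / poly P0 t) has_field_derivative 0) (at t within ball t0 \<delta>)"
    if t: "t \<in> ball t0 \<delta>" for t
  proof -
    have D: "((\<lambda>t. poly R t / poly P0 t) has_field_derivative
        (poly (pderiv R) t * poly P0 t - poly R t * poly (pderiv P0) t) / (poly P0 t * poly P0 t)) (at t)"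
      using nz[OF t] by (auto intro!: derivative_eq_intros poly_DERIV)
    have "poly (P0 * pderiv R) t = poly (pderiv P0 * R) t" using e by simp
    then have "poly (pderiv R) t * poly P0 t - poly R t * poly (pderiv P0) t = 0" by (simp add: algebra_simps)
    with D show ?thesis by (simp add: has_field_derivative_at_within)
  qed
  have "\<exists>c. \<forall>x\<in>ball t0 \<delta>. poly R x / poly P0 x = c"
    by (rule has_field_derivative_zero_constant[OF convex_ball]) (rule dz)
  then obtain c where c: "\<And>t. t \<in> ball t0 \<delta> \<Longrightarrow> poly R t / poly P0 t = c" by blast
  have "ball t0 \<delta> \<subseteq> {t. poly (R - smult c P0) t = 0}"
  proof
    fix t assume t: "t \<in> ball t0 \<delta>"
    show "t \<in> {t. poly (R - smult c P0) t = 0}" using c[OF t] nz[OF t] by (simp add: field_simps)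
  qed
  moreover have "infinite (ball t0 \<delta>)"
    using finite_imp_not_open[of "ball t0 \<delta>"] d0 by auto
  ultimately have "infinite {t. poly (R - smult c P0) t = 0}" using finite_subset by blast
  then have "R - smult c P0 = 0" using poly_roots_finite by blast
  then show ?thesis by auto
qed



definition WN :: "form set \<Rightarrow> nat \<Rightarrow> form list set" where
  "WN B N = {w. set w \<subseteq> B \<and> length w \<le> N}"

definition Dset :: "complex set" where "Dset = {z. 0 < norm z \<and> norm z < 1}"

lemma open_Dset: "open Dset"
proof -
  have "Dset = ball 0 1 - {0}" by (auto simp: Dset_def dist_norm)
  then show ?thesis by (metis open_ball open_delete)
qed

lemma Dset_ball: "z \<in> Dset \<Longrightarrow> z \<in> ball 0 1 \<and> z \<noteq> 0"
  by (auto simp: Dset_def dist_norm)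

lemma S0_good: "w \<in> S0 B \<Longrightarrow> good w"
  by (auto simp: S0_def good_def)

lemma S0_tl: "a # v \<in> S0 B \<Longrightarrow> v \<in> S0 B"
  by (cases v) (auto simp: S0_def)

lemma S0_set: "w \<in> S0 B \<Longrightarrow> set w \<subseteq> B"
  by (auto simp: S0_def)

lemma finite_WN: "finite B \<Longrightarrow> finite (WN B N)"
  unfolding WN_def by (rule finite_lists_length_le)

lemma poly_zero_Dset: "(\<And>z. z \<in> Dset \<Longrightarrow> poly q z = 0) \<Longrightarrow> q = 0"
proof (rule ccontr)
  assume h: "\<And>z. z \<in> Dset \<Longrightarrow> poly q z = 0" and q: "q \<noteq> 0"
  have "Dset \<subseteq> {z. poly q z = 0}" using h by auto
  moreover have "finite {z. poly q z = 0}" using q by (rule poly_roots_finite)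
  ultimately have "finite Dset" by (rule finite_subset)
  moreover have "(1/2 :: complex) \<in> Dset" by (simp add: Dset_def)
  ultimately show False using finite_imp_not_open[OF _ open_Dset] by auto
qed

definition newp :: "form set \<Rightarrow> complex \<Rightarrow> complex poly \<Rightarrow> (form list \<Rightarrow> complex poly) \<Rightarrow> form list \<Rightarrow> complex poly" where
  "newp B y P0 p v = P0 * Qp y * pderiv (p v) - Qp y * pderiv P0 * p v + P0 * (\<Sum>a\<in>B. p (a # v) * qf a y)"

locale indep =
  fixes B :: "form set" and y :: complex
  assumes finB: "finite B" and y0: "y \<noteq> 0" and y1: "norm y < 1"
    and inj: "inj_on (\<lambda>a. alpha a y) B"
begin

lemma derived_rel:
  fixes p :: "form list \<Rightarrow> complex poly" and P0 :: "complex poly"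
  assumes adm: "\<And>w. p w \<noteq> 0 \<Longrightarrow> w \<in> S0 B \<and> length w \<le> M"
    and rel: "\<And>z. z \<in> Dset \<Longrightarrow> (\<Sum>w\<in>WN B M. poly (p w) z * iter_int y w z) = 0"
    and z: "z \<in> Dset"
  shows "(\<Sum>v\<in>WN B M. poly (newp B y P0 p v) z * iter_int y v z) = 0"
proof -
  define W where "W = WN B M"
  have finW: "finite W" using finB by (simp add: W_def finite_WN)
  define L where "L = iter_int y"
  define dL where "dL = (\<lambda>w x. if w = [] then 0 else form_coef (hd w) y x * L (tl w) x)"
  define F where "F = (\<lambda>x. \<Sum>w\<in>W. poly (p w) x * L w x)"
  have zb: "z \<in> ball 0 1" "z \<noteq> 0" using Dset_ball[OF z] by auto
  have tder: "((\<lambda>x. poly (p w) x * L w x) has_field_derivative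
      poly (pderiv (p w)) z * L w z + poly (p w) z * dL w z) (at z)" for w
  proof (cases "p w = 0")
    case True then show ?thesis by simp
  next
    case False
    then have wS: "w \<in> S0 B" using adm by blast
    show ?thesis
    proof (cases w)
      case Nil
      then show ?thesis by (auto simp: L_def dL_def intro!: derivative_eq_intros poly_DERIV)
    next
      case (Cons a v)
      have "(iter_int y (a # v) has_field_derivative form_coef a y z * iter_int y v z) (at z)"
        using deriv_step[OF y1 _ zb] S0_good[OF wS] Cons by simp
      from DERIV_mult[OF poly_DERIV this, of "p w"]
      show ?thesis using Cons by (simp add: L_def dL_def mult.commute mult.left_commute del: iter_int.simps)
    qed
  qed
  have Fd: "(F has_field_derivative (\<Sum>w\<in>W. poly (pderiv (p w)) z * L w z + poly (p w) z * dL w z)) (at z)"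
    unfolding F_def by (rule DERIV_sum) (rule tder)
  have F0: "(F has_field_derivative 0) (at z)"
  proof -
    have "((\<lambda>x. 0) has_field_derivative 0) (at z)" by simp
    then show ?thesis
      by (rule has_field_derivative_transform_within_open[OF _ open_Dset z])
         (use rel in \<open>auto simp: F_def W_def L_def\<close>)
  qed
  have sum0: "(\<Sum>w\<in>W. poly (pderiv (p w)) z * L w z + poly (p w) z * dL w z) = 0"
    using DERIV_unique[OF Fd F0] .
  have Fz: "F z = 0" using rel[OF z] by (simp add: F_def W_def L_def)
  define g where "g = (\<lambda>w. poly (p w) z * dL w z)"
  define T where "T = (\<lambda>(v, a). a # v) ` (W \<times> B)"
  have injc: "inj_on (\<lambda>(v, a). a # v) (W \<times> B)" by (auto simp: inj_on_def)
  have finT: "finite T" using finW finB by (simp add: T_def)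
  have "(\<Sum>v\<in>W. \<Sum>a\<in>B. poly (p (a # v)) z * form_coef a y z * L v z) = (\<Sum>(v,a)\<in>W \<times> B. g (a # v))"
    by (simp add: sum.cartesian_product g_def dL_def mult.assoc)
  also have "\<dots> = (\<Sum>w\<in>T. g w)"
    unfolding T_def by (subst sum.reindex[OF injc]) (simp add: case_prod_unfold)
  also have "\<dots> = (\<Sum>w\<in>W \<union> T. g w)"
  proof (rule sum.mono_neutral_left)
    show "\<forall>i\<in>W \<union> T - T. g i = 0"
    proof
      fix w assume w: "w \<in> W \<union> T - T"
      show "g w = 0"
      proof (cases w)
        case Nil then show ?thesis by (simp add: g_def dL_def)
      next
        case (Cons a v)
        then have "a \<in> B" "v \<in> W" using w by (auto simp: W_def WN_def)
        then have "w \<in> T" using Cons by (force simp: T_def)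
        with w show ?thesis by simp
      qed
    qed
  qed (use finW finT in auto)
  also have "\<dots> = (\<Sum>w\<in>W. g w)"
  proof (rule sum.mono_neutral_right)
    show "\<forall>i\<in>W \<union> T - W. g i = 0"
    proof
      fix w assume w: "w \<in> W \<union> T - W"
      then obtain a v where "w = a # v" "a \<in> B" "v \<in> W" by (auto simp: T_def)
      with w have "length w > M" by (auto simp: W_def WN_def)
      then have "p w = 0" using adm by (meson not_le)
      then show "g w = 0" by (simp add: g_def)
    qed
  qed (use finW finT in auto)
  finally have reidx: "(\<Sum>v\<in>W. \<Sum>a\<in>B. poly (p (a # v)) z * form_coef a y z * L v z) = (\<Sum>w\<in>W. g w)" .
  have Qz: "poly (Qp y) z \<noteq> 0" using Q_nz_D[OF y0 y1] z by (simp add: Dset_def)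
  have qfe: "poly (qf a y) z = poly (Qp y) z * form_coef a y z" for a
    using qf_eq[OF y0 Qz] .
  have "(\<Sum>v\<in>W. poly (newp B y P0 p v) z * L v z)
      = poly P0 z * poly (Qp y) z * (\<Sum>w\<in>W. poly (pderiv (p w)) z * L w z)
        - poly (Qp y) z * poly (pderiv P0) z * F z
        + poly P0 z * poly (Qp y) z * (\<Sum>v\<in>W. \<Sum>a\<in>B. poly (p (a # v)) z * form_coef a y z * L v z)"
    by (simp add: newp_def F_def poly_sum qfe sum_distrib_left sum_distrib_right sum.distrib
        sum_subtractf algebra_simps)
  also have "\<dots> = poly P0 z * poly (Qp y) z * (\<Sum>w\<in>W. poly (pderiv (p w)) z * L w z)
        - poly (Qp y) z * poly (pderiv P0) z * F z
        + poly P0 z * poly (Qp y) z * (\<Sum>w\<in>W. g w)"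
    by (simp only: reidx)
  also have "\<dots> = poly P0 z * poly (Qp y) z * (\<Sum>w\<in>W. poly (pderiv (p w)) z * L w z + poly (p w) z * dL w z)"
    by (simp add: Fz g_def sum.distrib distrib_left)
  also have "\<dots> = 0" by (simp add: sum0)
  finally show ?thesis by (simp add: W_def L_def)
qed

end



context indep begin

lemma WN_Suc_top: "length v = Suc N \<Longrightarrow> v \<in> WN B (Suc N) \<or> set v \<notin> Pow B"
  by (auto simp: WN_def)

lemma main:
  "\<forall>p. (\<forall>w. p w \<noteq> 0 \<longrightarrow> w \<in> S0 B \<and> length w \<le> N)
     \<longrightarrow> card {w\<in>WN B N. length w = N \<and> p w \<noteq> 0} \<le> k
     \<longrightarrow> (\<forall>z\<in>Dset. (\<Sum>w\<in>WN B N. poly (p w) z * iter_int y w z) = 0)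
     \<longrightarrow> (\<forall>w. p w = 0)"
proof (induction N arbitrary: k)
  case 0
  show ?case
  proof (intro allI impI)
    fix p :: "form list \<Rightarrow> complex poly" and w
    assume adm: "\<forall>w. p w \<noteq> 0 \<longrightarrow> w \<in> S0 B \<and> length w \<le> 0"
      and rel: "\<forall>z\<in>Dset. (\<Sum>w\<in>WN B 0. poly (p w) z * iter_int y w z) = 0"
    have "WN B 0 = {[]}" by (auto simp: WN_def)
    then have "p [] = 0" using rel by (intro poly_zero_Dset) auto
    then show "p w = 0" using adm by (cases w) auto
  qed
next
  case (Suc N)
  note IHN = Suc.IH
  show ?case
  proof (induction k)
    case 0
    show ?case
    proof (intro allI impI)
      fix p :: "form list \<Rightarrow> complex poly" and w
      assume adm: "\<forall>w. p w \<noteq> 0 \<longrightarrow> w \<in> S0 B \<and> length w \<le> Suc N"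
        and cd: "card {w\<in>WN B (Suc N). length w = Suc N \<and> p w \<noteq> 0} \<le> 0"
        and rel: "\<forall>z\<in>Dset. (\<Sum>w\<in>WN B (Suc N). poly (p w) z * iter_int y w z) = 0"
      have fin: "finite {w\<in>WN B (Suc N). length w = Suc N \<and> p w \<noteq> 0}"
        using finite_WN[OF finB] by simp
      have e: "{w\<in>WN B (Suc N). length w = Suc N \<and> p w \<noteq> 0} = {}" using cd fin by simp
      have adm': "\<forall>w. p w \<noteq> 0 \<longrightarrow> w \<in> S0 B \<and> length w \<le> N"
      proof (intro allI impI)
        fix w assume "p w \<noteq> 0"
        with adm have "w \<in> S0 B" "length w \<le> Suc N" by auto
        moreover have "length w \<noteq> Suc N"
          using e \<open>p w \<noteq> 0\<close> S0_set[OF \<open>w \<in> S0 B\<close>] calculation by (auto simp: WN_def)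
        ultimately show "w \<in> S0 B \<and> length w \<le> N" by auto
      qed
      have rel': "\<forall>z\<in>Dset. (\<Sum>w\<in>WN B N. poly (p w) z * iter_int y w z) = 0"
      proof
        fix z assume z: "z \<in> Dset"
        have "(\<Sum>w\<in>WN B N. poly (p w) z * iter_int y w z) = (\<Sum>w\<in>WN B (Suc N). poly (p w) z * iter_int y w z)"
        proof (rule sum.mono_neutral_left[OF finite_WN[OF finB]])
          show "\<forall>i\<in>WN B (Suc N) - WN B N. poly (p i) z * iter_int y i z = 0"
          proof
            fix i assume i: "i \<in> WN B (Suc N) - WN B N"
            then have "\<not> length i \<le> N" by (auto simp: WN_def)
            then have "p i = 0" using adm' by auto
            then show "poly (p i) z * iter_int y i z = 0" by simp
          qed
        next show "WN B N \<subseteq> WN B (Suc N)" by (auto simp: WN_def) qed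
        then show "(\<Sum>w\<in>WN B N. poly (p w) z * iter_int y w z) = 0" using rel z by simp
      qed
      have "\<forall>w. p w = 0"
        by (rule mp[OF mp[OF mp[OF spec[OF IHN[of "card {w\<in>WN B N. length w = N \<and> p w \<noteq> 0}"], of p] adm'] le_refl] rel'])
      then show "p w = 0" by blast
    qed
  next
    case (Suc k)
    note IHk = Suc.IH
    show ?case
    proof (intro allI impI)
      fix p :: "form list \<Rightarrow> complex poly" and w0
      assume adm: "\<forall>w. p w \<noteq> 0 \<longrightarrow> w \<in> S0 B \<and> length w \<le> Suc N"
        and cd: "card {w\<in>WN B (Suc N). length w = Suc N \<and> p w \<noteq> 0} \<le> Suc k"
        and rel: "\<forall>z\<in>Dset. (\<Sum>w\<in>WN B (Suc N). poly (p w) z * iter_int y w z) = 0"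
      define Top where "Top = {w\<in>WN B (Suc N). length w = Suc N \<and> p w \<noteq> 0}"
      have finTop: "finite Top" using finite_WN[OF finB] by (simp add: Top_def)
      show "p w0 = 0"
      proof (cases "Top = {}")
        case True
        then have "card Top \<le> k" by simp
        then have "\<forall>w. p w = 0"
          by (intro mp[OF mp[OF mp[OF spec[OF IHk, of p] adm]] rel]) (simp add: Top_def)
        then show ?thesis by blast
      next
        case False
        then obtain u0 where u0: "u0 \<in> Top" by blast
        define P0 where "P0 = p u0"
        have P0nz: "P0 \<noteq> 0" and lu0: "length u0 = Suc N" and u0S: "u0 \<in> S0 B"
          using u0 adm by (auto simp: Top_def P0_def)
        define q where "q = newp B y P0 p"
        have ptop: "p (a # v) = 0" if "length v = Suc N" for a v
          using adm that by fastforce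
        have qtop: "q v = Qp y * (P0 * pderiv (p v) - pderiv P0 * p v)" if "length v = Suc N" for v
          using ptop[OF that] by (simp add: q_def newp_def algebra_simps)
        have adm_q: "\<forall>v. q v \<noteq> 0 \<longrightarrow> v \<in> S0 B \<and> length v \<le> Suc N"
        proof (intro allI impI)
          fix v assume qv: "q v \<noteq> 0"
          show "v \<in> S0 B \<and> length v \<le> Suc N"
          proof (cases "p v = 0")
            case False then show ?thesis using adm by blast
          next
            case True
            have "\<exists>a\<in>B. p (a # v) \<noteq> 0"
            proof (rule ccontr)
              assume "\<not> (\<exists>a\<in>B. p (a # v) \<noteq> 0)"
              then have "q v = 0" using True by (simp add: q_def newp_def)
              with qv show False by simp
            qed
            then obtain a where "p (a # v) \<noteq> 0" by blast
            then have "a # v \<in> S0 B" "length (a # v) \<le> Suc N" using adm by blast+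
            then show ?thesis using S0_tl by auto
          qed
        qed
        have Topq: "{v\<in>WN B (Suc N). length v = Suc N \<and> q v \<noteq> 0} \<subseteq> Top - {u0}"
        proof
          fix v assume v: "v \<in> {v\<in>WN B (Suc N). length v = Suc N \<and> q v \<noteq> 0}"
          then have lv: "length v = Suc N" and qv: "q v \<noteq> 0" by auto
          have "p v \<noteq> 0" using qtop[OF lv] qv by auto
          moreover have "v \<noteq> u0" using qtop[OF lv] qv by (auto simp: P0_def mult.commute)
          ultimately show "v \<in> Top - {u0}" using v by (auto simp: Top_def)
        qed
        have "card (Top - {u0}) \<le> k" using cd u0 finTop by (simp add: Top_def)
        then have cdq: "card {v\<in>WN B (Suc N). length v = Suc N \<and> q v \<noteq> 0} \<le> k"
          using card_mono[OF _ Topq] finTop by (meson finite_Diff le_trans)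
        have relq: "\<forall>z\<in>Dset. (\<Sum>w\<in>WN B (Suc N). poly (q w) z * iter_int y w z) = 0"
        proof
          fix z assume z: "z \<in> Dset"
          show "(\<Sum>w\<in>WN B (Suc N). poly (q w) z * iter_int y w z) = 0"
            unfolding q_def by (rule derived_rel[OF _ _ z]) (use adm rel in auto)
        qed
        have "\<forall>v. q v = 0" by (rule mp[OF mp[OF mp[OF spec[OF IHk, of q] adm_q] cdq] relq])
        then have q0: "\<And>v. q v = 0" by blast
        have propc: "\<exists>c. p v = smult c P0" if lv: "length v = Suc N" for v
        proof -
          have "Qp y * (P0 * pderiv (p v) - pderiv P0 * p v) = 0" using qtop[OF lv] q0 by simp
          then have "P0 * pderiv (p v) = pderiv P0 * p v" using Qp_nz by simp
          then show ?thesis by (rule poly_ratio_const[OF P0nz])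
        qed
        obtain a0 v0 where u0e: "u0 = a0 # v0" using lu0 by (cases u0) auto
        have lv0: "length v0 = N" using lu0 u0e by simp
        have a0B: "a0 \<in> B" using S0_set[OF u0S] u0e by simp
        define cf where "cf = (\<lambda>a. SOME c. p (a # v0) = smult c P0)"
        have cfe: "p (a # v0) = smult (cf a) P0" for a
          unfolding cf_def by (rule someI_ex) (rule propc, simp add: lv0)
        have "q v0 = 0" by (rule q0)
        then have "P0 * Qp y * pderiv (p v0) - Qp y * pderiv P0 * p v0
            + P0 * (\<Sum>a\<in>B. smult (cf a) P0 * qf a y) = 0"
          by (simp add: q_def newp_def cfe)
        then have "cf a0 = 0" by (rule residue_lemma[OF y0 finB inj P0nz _ a0B])
        then have "p u0 = 0" using cfe[of a0] u0e by simp
        with P0nz show ?thesis by (simp add: P0_def)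
      qed
    qed
  qed
qed

lemma indep_const:
  assumes finW: "finite W" and WS: "W \<subseteq> S0 B"
    and rel: "\<And>z. z \<in> Dset \<Longrightarrow> (\<Sum>w\<in>W. a w * iter_int y w z) = 0"
    and w: "w \<in> W"
  shows "a w = 0"
proof -
  define N where "N = Max (length ` W)"
  have lN: "length u \<le> N" if "u \<in> W" for u
    unfolding N_def using finW that by simp
  define p where "p = (\<lambda>u. if u \<in> W then [:a u:] else 0)"
  have adm: "\<forall>u. p u \<noteq> 0 \<longrightarrow> u \<in> S0 B \<and> length u \<le> N"
    using WS lN by (auto simp: p_def split: if_splits)
  have sub: "W \<subseteq> WN B N"
  proof
    fix u assume u: "u \<in> W"
    then have "set u \<subseteq> B" using WS S0_set by blast
    then show "u \<in> WN B N" using lN[OF u] by (simp add: WN_def)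
  qed
  have relp: "\<forall>z\<in>Dset. (\<Sum>u\<in>WN B N. poly (p u) z * iter_int y u z) = 0"
  proof
    fix z assume z: "z \<in> Dset"
    have "(\<Sum>u\<in>WN B N. poly (p u) z * iter_int y u z) = (\<Sum>u\<in>W. poly (p u) z * iter_int y u z)"
      by (rule sum.mono_neutral_right) (use sub finite_WN[OF finB] in \<open>auto simp: p_def\<close>)
    also have "\<dots> = (\<Sum>u\<in>W. a u * iter_int y u z)" by (rule sum.cong) (auto simp: p_def)
    finally show "(\<Sum>u\<in>WN B N. poly (p u) z * iter_int y u z) = 0" using rel[OF z] by simp
  qed
  have "\<forall>u. p u = 0"
    using main[of N "card {u\<in>WN B N. length u = N \<and> p u \<noteq> 0}"] adm relp by blast
  then have "p w = 0" by blast
  then show ?thesis using w by (simp add: p_def)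
qed

end



lemma iter_int_param:
  "set v \<subseteq> {Z1, Z11, Z2, Z22} \<Longrightarrow> iter_int y v z = iter_int y' v z"
proof (induction v arbitrary: z)
  case Nil then show ?case by simp
next
  case (Cons a v)
  have fa: "form_coef a y = form_coef a y'" using Cons.prems by (cases a) (auto simp: fun_eq_iff)
  have "iter_int y v = iter_int y' v" using Cons by (auto simp: fun_eq_iff)
  then show ?case using fa by simp
qed

lemma tensor_gen:
  fixes d :: "form list \<times> form list \<Rightarrow> complex"
  assumes I1: "\<And>s. s \<in> Dset \<Longrightarrow> indep B1 s" and I2: "indep B2 yb"
    and B2sub: "B2 \<subseteq> {Z1, Z11, Z2, Z22}"
    and finT: "finite T"
    and supp: "\<And>p. d p \<noteq> 0 \<Longrightarrow> p \<in> T \<and> fst p \<in> S0 B1 \<and> snd p \<in> S0 B2"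
    and rel: "\<And>x s. x \<in> Dset \<Longrightarrow> s \<in> Dset \<Longrightarrow>
       (\<Sum>p\<in>T. d p * (iter_int s (fst p) x * iter_int x (snd p) s)) = 0"
  shows "d p = 0"
proof -
  define T' where "T' = {p\<in>T. d p \<noteq> 0}"
  have finT': "finite T'" using finT by (simp add: T'_def)
  define W1 where "W1 = fst ` T'"
  define W2 where "W2 = snd ` T'"
  have finW: "finite W1" "finite W2" using finT' by (auto simp: W1_def W2_def)
  have W1S: "W1 \<subseteq> S0 B1" and W2S: "W2 \<subseteq> S0 B2" using supp by (auto simp: W1_def W2_def T'_def)
  define M where "M = (\<lambda>v s. iter_int yb v s)"
  have Mx: "iter_int x v s = M v s" if "v \<in> W2" for x v s
  proof -
    have "set v \<subseteq> B2" using W2S that S0_set by blast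
    then show ?thesis unfolding M_def using B2sub by (intro iter_int_param) auto
  qed
  have rel2: "(\<Sum>w\<in>W1. (\<Sum>v\<in>W2. d (w, v) * M v s) * iter_int s w x) = 0"
    if x: "x \<in> Dset" and s: "s \<in> Dset" for x s
  proof -
    define f where "f = (\<lambda>p. d p * (iter_int s (fst p) x * iter_int x (snd p) s))"
    have "(\<Sum>p\<in>T. f p) = (\<Sum>p\<in>T'. f p)"
      by (rule sum.mono_neutral_right) (use finT in \<open>auto simp: T'_def f_def\<close>)
    also have "\<dots> = (\<Sum>p\<in>W1 \<times> W2. f p)"
    proof (rule sum.mono_neutral_left)
      show "finite (W1 \<times> W2)" using finW by simp
      show "T' \<subseteq> W1 \<times> W2" by (force simp: W1_def W2_def)
      show "\<forall>p\<in>W1 \<times> W2 - T'. f p = 0"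
      proof
        fix p assume "p \<in> W1 \<times> W2 - T'"
        then have "p \<notin> T'" by blast
        then have "d p = 0" using supp[of p] by (auto simp: T'_def)
        then show "f p = 0" by (simp add: f_def)
      qed
    qed
    also have "\<dots> = (\<Sum>w\<in>W1. \<Sum>v\<in>W2. f (w, v))"
      by (simp add: sum.cartesian_product)
    also have "\<dots> = (\<Sum>w\<in>W1. (\<Sum>v\<in>W2. d (w, v) * M v s) * iter_int s w x)"
      by (intro sum.cong refl) (simp add: f_def Mx sum_distrib_left sum_distrib_right mult_ac)
    finally show ?thesis using rel[OF x s] by (simp add: f_def)
  qed
  have c1: "(\<Sum>v\<in>W2. d (w, v) * M v s) = 0" if w: "w \<in> W1" and s: "s \<in> Dset" for w s
    using indep.indep_const[OF I1[OF s] finW(1) W1S _ w, of "\<lambda>w. \<Sum>v\<in>W2. d (w, v) * M v s"]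
      rel2[OF _ s] by blast
  have c2: "d (w, v) = 0" if w: "w \<in> W1" and v: "v \<in> W2" for w v
    using indep.indep_const[OF I2 finW(2) W2S _ v, of "\<lambda>v. d (w, v)"] c1[OF w]
    by (simp add: M_def)
  show ?thesis
  proof (rule ccontr)
    assume "d p \<noteq> 0"
    then have "p \<in> T'" using supp by (simp add: T'_def)
    then have "fst p \<in> W1" "snd p \<in> W2" by (auto simp: W1_def W2_def)
    then have "d (fst p, snd p) = 0" by (rule c2)
    with \<open>d p \<noteq> 0\<close> show False by simp
  qed
qed

lemma lin_ext_T:
  assumes "finite T" "{p. c p \<noteq> 0} \<subseteq> T"
  shows "lin_ext I c z = (\<Sum>p\<in>T. c p * I p z)"
  unfolding lin_ext_def by (rule sum.mono_neutral_left) (use assms in auto)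

lemma inj_gen:
  assumes I1: "\<And>s. s \<in> Dset \<Longrightarrow> indep B1 s" and I2: "indep B2 yb"
    and B2sub: "B2 \<subseteq> {Z1, Z11, Z2, Z22}"
    and Ieq: "\<And>p x s. I p (\<phi> x s) = iter_int s (fst p) x * iter_int x (snd p) s"
    and \<phi>: "\<And>x s. x \<in> Dset \<Longrightarrow> s \<in> Dset \<Longrightarrow> \<phi> x s \<in> bidisc"
  shows "inj_on (\<lambda>c. restrict (lin_ext I c) bidisc) (tensor_S0 B1 B2)"
proof (rule inj_onI)
  fix c1 c2 assume c1: "c1 \<in> tensor_S0 B1 B2" and c2: "c2 \<in> tensor_S0 B1 B2"
    and eq: "restrict (lin_ext I c1) bidisc = restrict (lin_ext I c2) bidisc"
  define T where "T = {p. c1 p \<noteq> 0} \<union> {p. c2 p \<noteq> 0}"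
  have finT: "finite T" using c1 c2 by (simp add: T_def tensor_S0_def)
  define d where "d = (\<lambda>p. c1 p - c2 p)"
  have supp: "p \<in> T \<and> fst p \<in> S0 B1 \<and> snd p \<in> S0 B2" if "d p \<noteq> 0" for p
  proof -
    have "c1 p \<noteq> 0 \<or> c2 p \<noteq> 0" using that by (auto simp: d_def)
    then show ?thesis using c1 c2 unfolding T_def tensor_S0_def by blast
  qed
  have rel: "(\<Sum>p\<in>T. d p * (iter_int s (fst p) x * iter_int x (snd p) s)) = 0"
    if x: "x \<in> Dset" and s: "s \<in> Dset" for x s
  proof -
    have "lin_ext I c1 (\<phi> x s) = lin_ext I c2 (\<phi> x s)"
      using fun_cong[OF eq, of "\<phi> x s"] \<phi>[OF x s] by simp
    then have "(\<Sum>p\<in>T. c1 p * I p (\<phi> x s)) = (\<Sum>p\<in>T. c2 p * I p (\<phi> x s))"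
      by (simp add: lin_ext_T[OF finT] T_def)
    then have "(\<Sum>p\<in>T. d p * I p (\<phi> x s)) = 0"
      by (simp add: d_def left_diff_distrib sum_subtractf)
    then show ?thesis by (simp add: Ieq)
  qed
  have "d p = 0" for p
    by (rule tensor_gen[OF I1 I2 B2sub finT supp rel]) auto
  then show "c1 = c2" by (auto simp: d_def fun_eq_iff)
qed

lemma indep_inst3:
  assumes s: "s \<in> Dset" and B: "B = {Z1, Z11, Z12a} \<or> B = {Z2, Z22, Z12b}"
  shows "indep B s"
proof
  show "finite B" using B by auto
  show "s \<noteq> 0" "norm s < 1" using s by (auto simp: Dset_def)
  have "1 / s \<noteq> 1" using s by (auto simp: Dset_def)
  moreover have "1 / s \<noteq> 0" using s by (auto simp: Dset_def)
  ultimately show "inj_on (\<lambda>a. alpha a s) B" using B by (auto simp: inj_on_def)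
qed

lemma indep_inst2:
  assumes B: "B = {Z1, Z11} \<or> B = {Z2, Z22}"
  shows "indep B (1/2)"
proof
  show "finite B" using B by auto
  show "inj_on (\<lambda>a. alpha a (1/2)) B" using B by (auto simp: inj_on_def)
qed auto

theorem corollary5p11:
  shows "inj_on (\<lambda>c. restrict (lin_ext int_C12 c) bidisc) (tensor_S0 A1_12 A2_12)
       \<and> inj_on (\<lambda>c. restrict (lin_ext int_C21 c) bidisc) (tensor_S0 A2_21 A1_21)"
proof
  show "inj_on (\<lambda>c. restrict (lin_ext int_C12 c) bidisc) (tensor_S0 A1_12 A2_12)"
    by (rule inj_gen[where \<phi> = "\<lambda>x s. (x, s)" and yb = "1/2"])
       (auto simp: A1_12_def A2_12_def int_C12_def bidisc_def Dset_def intro: indep_inst3 indep_inst2)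
  show "inj_on (\<lambda>c. restrict (lin_ext int_C21 c) bidisc) (tensor_S0 A2_21 A1_21)"
    by (rule inj_gen[where \<phi> = "\<lambda>x s. (s, x)" and yb = "1/2"])
       (auto simp: A2_21_def A1_21_def int_C21_def bidisc_def Dset_def intro: indep_inst3 indep_inst2)
qed



end
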